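(* Assume $f$ has a unique global maximizer $g$ and the problem contains no weak epistasis. Then for every $v\in V$, the assignment $\{(\mathcal{IN}^*(v),g)\}=\{(u,g[u]):u\in\mathcal{IN}^*(v)\}$ is a stationary optimum.
   Context: Fix $\ell\ge1$, loci $V=\{0,\dots,\ell-1\}$, chromosomes $\vec y\in\{0,1\}^V$, fitness $f:\{0,1\}^V\to\mathbb R$ (maximized) with unique global maximizer $g$. An assignment $A$ is a set of pairs $(v,a)$ ($v\in V$, $a\in\{0,1\}$) with at most one pair per locus; $A[v]=a$ if $(v,a)\in A$, else $A[v]=*$; coverage $\mathcal C(A)=\{v:A[v]\ne*\}$; for $S\subseteq V$, $\{(S,g)\}=\{(s,g[s]):s\in S\}$. $\Psi_A$ (constrained optima) is the set of chromosomes agreeing with $A$ on $\mathcal C(A)$ with maximum fitness among such chromosomes; $\Psi_A[v]=\{\psi_v:\psi\in\Psi_A\}$. For full assignments $B$, $f(B)$ is the fitness of the corresponding chromosome. Epistasis: for $v\in V$ and nonempty $S\subseteq V\setminus\{v\}$, $S\Rightarrow v$ iff for every $s\in S$ there exists an assignment $A$ with $\mathcal C(A)=S$ and $\Psi_A[v]\neq\Psi_{A\setminus\{(s,A[s])\}}[v]$; the empty set is never epistatic. An epistasis $S\Rightarrow v$ with $|S|\ge2$ is weak if no nonempty proper subset $T\subsetneq S$ has $T\Rightarrow v$; "no weak epistasis" means no epistasis is weak. The epistatic graph (EG) is the directed graph on $V$ with an edge $u\to v$ iff $\{u\}\Rightarrow v$. $\mathcal{IN}^0(v)=\{v\}$,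 $\mathcal{IN}^i(v)=\{u:\exists w\in\mathcal{IN}^{i-1}(v),\ \{u\}\Rightarrow w\}$ for $i\ge1$, and $\mathcal{IN}^*(v)=\bigcup_{i=0}^{\ell-1}\mathcal{IN}^i(v)$ (the in-closure of $v$: $v$ together with all vertices having a directed path to $v$ in the EG). A stationary optimum is a nonempty assignment $A$ such that for every assignment $A'\neq A$ with $\mathcal C(A')=\mathcal C(A)$ and every assignment $R$ with $\mathcal C(R)=V\setminus\mathcal C(A)$, $f(A\cup R)>f(A'\cup R)$. *)

theory Defs
  imports Complex_Main
begin

text \<open>An assignment is a partial map from loci to bits
(at most one value per locus); its coverage is its domain. The fitness f is applied to full assignments.\<close>

definition loci :: "nat \<Rightarrow> nat set" where
  "loci l = {0..<l}"

definition is_assignment :: "nat \<Rightarrow> (nat \<rightharpoonup> bool) \<Rightarrow> bool" where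
  "is_assignment l A \<longleftrightarrow> dom A \<subseteq> loci l"

definition is_chrom :: "nat \<Rightarrow> (nat \<rightharpoonup> bool) \<Rightarrow> bool" where
  "is_chrom l y \<longleftrightarrow> dom y = loci l"

definition unique_global_max ::
  "nat \<Rightarrow> ((nat \<rightharpoonup> bool) \<Rightarrow> real) \<Rightarrow> (nat \<rightharpoonup> bool) \<Rightarrow> bool" where
  "unique_global_max l f g \<longleftrightarrow> is_chrom l g \<and>
     (\<forall>y. is_chrom l y \<and> y \<noteq> g \<longrightarrow> f y < f g)"

definition constrained_optima ::
  "nat \<Rightarrow> ((nat \<rightharpoonup> bool) \<Rightarrow> real) \<Rightarrow> (nat \<rightharpoonup> bool) \<Rightarrow> (nat \<rightharpoonup> bool) set" where
  "constrained_optima l f A = {y. is_chrom l y \<and> A \<subseteq>\<^sub>m y \<and>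
     (\<forall>z. is_chrom l z \<and> A \<subseteq>\<^sub>m z \<longrightarrow> f z \<le> f y)}"

definition psi_at ::
  "nat \<Rightarrow> ((nat \<rightharpoonup> bool) \<Rightarrow> real) \<Rightarrow> (nat \<rightharpoonup> bool) \<Rightarrow> nat \<Rightarrow> bool option set" where
  "psi_at l f A v = (\<lambda>y. y v) ` constrained_optima l f A"

definition epistatic ::
  "nat \<Rightarrow> ((nat \<rightharpoonup> bool) \<Rightarrow> real) \<Rightarrow> nat set \<Rightarrow> nat \<Rightarrow> bool" where
  "epistatic l f S v \<longleftrightarrow> v \<in> loci l \<and> S \<noteq> {} \<and> S \<subseteq> loci l - {v} \<and>
     (\<forall>s\<in>S. \<exists>A. dom A = S \<and> psi_at l f A v \<noteq> psi_at l f (A(s := None)) v)"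

definition weak_epistasis ::
  "nat \<Rightarrow> ((nat \<rightharpoonup> bool) \<Rightarrow> real) \<Rightarrow> nat set \<Rightarrow> nat \<Rightarrow> bool" where
  "weak_epistasis l f S v \<longleftrightarrow> epistatic l f S v \<and> card S \<ge> 2 \<and>
     \<not> (\<exists>T. T \<noteq> {} \<and> T \<subset> S \<and> epistatic l f T v)"

definition no_weak_epistasis :: "nat \<Rightarrow> ((nat \<rightharpoonup> bool) \<Rightarrow> real) \<Rightarrow> bool" where
  "no_weak_epistasis l f \<longleftrightarrow> (\<forall>S v. \<not> weak_epistasis l f S v)"

text \<open>In-sets of the epistatic graph (edge u -> w iff {u} => w).\<close>
fun IN :: "nat \<Rightarrow> ((nat \<rightharpoonup> bool) \<Rightarrow> real) \<Rightarrow> nat \<Rightarrow> nat \<Rightarrow> nat set" where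
  "IN l f 0 v = {v}"
| "IN l f (Suc i) v = {u. \<exists>w\<in>IN l f i v. epistatic l f {u} w}"

definition IN_star :: "nat \<Rightarrow> ((nat \<rightharpoonup> bool) \<Rightarrow> real) \<Rightarrow> nat \<Rightarrow> nat set" where
  "IN_star l f v = (\<Union>i<l. IN l f i v)"

definition stationary_optimum ::
  "nat \<Rightarrow> ((nat \<rightharpoonup> bool) \<Rightarrow> real) \<Rightarrow> (nat \<rightharpoonup> bool) \<Rightarrow> bool" where
  "stationary_optimum l f A \<longleftrightarrow> is_assignment l A \<and> A \<noteq> Map.empty \<and>
     (\<forall>A' R. dom A' = dom A \<and> A' \<noteq> A \<and> dom R = loci l - dom A \<longrightarrow>
        f (R ++ A) > f (R ++ A'))"

end

theory Submission
  imports Defs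
begin

lemma epi_singleton_aux:
  assumes nw: "no_weak_epistasis l f"
  shows "\<forall>T. card T \<le> n \<longrightarrow> epistatic l f T w \<longrightarrow> (\<exists>u\<in>T. epistatic l f {u} w)"
proof (induction n)
  case 0
  show ?case
  proof (intro allI impI)
    fix T assume c: "card T \<le> 0" and e: "epistatic l f T w"
    have sub: "T \<subseteq> loci l" and ne: "T \<noteq> {}" using e unfolding epistatic_def by auto
    have fin: "finite T" by (rule finite_subset[OF sub]) (simp add: loci_def)
    have "card T \<noteq> 0" using fin ne by simp
    then show "\<exists>u\<in>T. epistatic l f {u} w" using c by simp
  qed
next
  case (Suc n)
  note IH = Suc.IH[rule_format]
  show ?case
  proof (intro allI impI)
    fix T assume c: "card T \<le> Suc n" and e: "epistatic l f T w"
    have sub: "T \<subseteq> loci l" and ne: "T \<noteq> {}" using e unfolding epistatic_def by auto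
    have fin: "finite T" by (rule finite_subset[OF sub]) (simp add: loci_def)
    show "\<exists>u\<in>T. epistatic l f {u} w"
    proof (cases "card T \<ge> 2")
      case True
      have "\<not> weak_epistasis l f T w" using nw unfolding no_weak_epistasis_def by simp
      then have "\<exists>T'. T' \<noteq> {} \<and> T' \<subset> T \<and> epistatic l f T' w"
        using e True unfolding weak_epistasis_def by blast
      then obtain T' where T': "T' \<noteq> {}" "T' \<subset> T" "epistatic l f T' w" by (elim exE conjE) simp
      have "card T' < card T" by (rule psubset_card_mono[OF fin T'(2)])
      then have c1: "card T' \<le> n" using c by linarith
      obtain u where "u \<in> T'" "epistatic l f {u} w" using IH[OF c1 T'(3)] by (elim bexE)
      then show ?thesis using T'(2) by blast
    next
      case False
      have "card T \<noteq> 0" using fin ne by simp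
      then have "card T = 1" using False by linarith
      then obtain u where "T = {u}" by (rule card_1_singletonE)
      then show ?thesis using e by simp
    qed
  qed
qed

lemma epi_singleton:
  assumes nw: "no_weak_epistasis l f"
  shows "epistatic l f T w \<Longrightarrow> \<exists>u\<in>T. epistatic l f {u} w"
  using epi_singleton_aux[OF nw, of "card T" w] by blast

lemma psi_invariant_aux:
  assumes nw: "no_weak_epistasis l f"
    and clos: "\<And>u. epistatic l f {u} w \<Longrightarrow> u \<in> S"
    and wS: "w \<in> S" and wl: "w \<in> loci l"
  shows "\<forall>A. card (dom A) \<le> n \<longrightarrow> dom A \<subseteq> loci l - S \<longrightarrow> psi_at l f A w = psi_at l f Map.empty w"
proof (induction n)
  case 0
  show ?case
  proof (intro allI impI)
    fix A :: "nat \<rightharpoonup> bool"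
    assume c: "card (dom A) \<le> 0" and d: "dom A \<subseteq> loci l - S"
    have fin: "finite (dom A)"
      by (rule finite_subset[OF d]) (simp add: loci_def)
    have "dom A = {}" using c fin by simp
    then have "A = Map.empty" by simp
    then show "psi_at l f A w = psi_at l f Map.empty w" by simp
  qed
next
  case (Suc n)
  note IH = Suc.IH[rule_format]
  show ?case
  proof (intro allI impI)
    fix A :: "nat \<rightharpoonup> bool"
    assume c: "card (dom A) \<le> Suc n" and dA: "dom A \<subseteq> loci l - S"
    have fin: "finite (dom A)"
      by (rule finite_subset[OF dA]) (simp add: loci_def)
    show "psi_at l f A w = psi_at l f Map.empty w"
    proof (cases "dom A = {}")
      case True
      then have "A = Map.empty" by simp
      then show ?thesis by simp
    next
      case False
      show ?thesis
      proof (rule ccontr)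
        assume neq: "psi_at l f A w \<noteq> psi_at l f Map.empty w"
        have "epistatic l f (dom A) w"
          unfolding epistatic_def
        proof (intro conjI ballI)
          show "w \<in> loci l" by (rule wl)
          show "dom A \<noteq> {}" by (rule False)
          show "dom A \<subseteq> loci l - {w}" using dA wS by blast
        next
          fix s assume s: "s \<in> dom A"
          have d: "dom (A(s := None)) = dom A - {s}" by simp
          have "card (dom (A(s := None))) < card (dom A)"
            unfolding d by (rule card_Diff1_less[OF fin s])
          then have c1: "card (dom (A(s := None))) \<le> n" using c by linarith
          have d1: "dom (A(s := None)) \<subseteq> loci l - S" unfolding d using dA by blast
          have "psi_at l f (A(s := None)) w = psi_at l f Map.empty w"
            by (rule IH[OF c1 d1])
          then have "psi_at l f A w \<noteq> psi_at l f (A(s := None)) w" using neq by simp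
          then show "\<exists>B. dom B = dom A \<and> psi_at l f B w \<noteq> psi_at l f (B(s := None)) w"
            by (intro exI[of _ A] conjI refl)
        qed
        then obtain u where "u \<in> dom A" "epistatic l f {u} w"
          using epi_singleton[OF nw] by blast
        then show False using clos dA by blast
      qed
    qed
  qed
qed

lemma psi_invariant:
  assumes nw: "no_weak_epistasis l f"
    and clos: "\<And>u. epistatic l f {u} w \<Longrightarrow> u \<in> S"
    and wS: "w \<in> S" and wl: "w \<in> loci l"
  shows "dom A \<subseteq> loci l - S \<Longrightarrow> psi_at l f A w = psi_at l f Map.empty w"
  using psi_invariant_aux[OF nw clos wS wl, of "card (dom A)"] by blast

lemma chrom_finite: "finite {y. is_chrom l (y :: nat \<rightharpoonup> bool)}"
proof -
  have "{y. is_chrom l (y :: nat \<rightharpoonup> bool)} = {m. dom m = loci l \<and> ran m \<subseteq> UNIV}"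
    unfolding is_chrom_def by auto
  then show ?thesis using finite_set_of_finite_maps[of "loci l" "UNIV :: bool set"]
    unfolding loci_def by simp
qed

lemma optima_exist:
  assumes "dom R \<subseteq> loci l"
  shows "\<exists>y. y \<in> constrained_optima l f R"
proof -
  define X where "X = {y. is_chrom l y \<and> R \<subseteq>\<^sub>m y}"
  define K :: "nat \<rightharpoonup> bool" where "K = (\<lambda>x. if x \<in> loci l then Some True else None)"
  have "dom K = loci l" unfolding K_def dom_def by auto
  then have "K ++ R \<in> X" unfolding X_def is_chrom_def using assms map_le_map_add by auto
  moreover have "finite X" using chrom_finite[of l] unfolding X_def
    by (rule rev_finite_subset) auto
  ultimately have fin: "finite (f ` X)" and ne: "f ` X \<noteq> {}" by auto
  obtain y where y: "y \<in> X" "f y = Max (f ` X)" using Max_in[OF fin ne] by auto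
  have "\<forall>z. z \<in> X \<longrightarrow> f z \<le> f y" using y(2) fin by auto
  then show ?thesis using y(1) unfolding X_def constrained_optima_def by blast
qed

lemma optima_empty:
  assumes "unique_global_max l f g"
  shows "constrained_optima l f Map.empty = {g}"
proof
  have gc: "is_chrom l g" and gm: "\<And>y. is_chrom l y \<Longrightarrow> y \<noteq> g \<Longrightarrow> f y < f g"
    using assms unfolding unique_global_max_def by auto
  show "{g} \<subseteq> constrained_optima l f Map.empty"
  proof -
    have "\<forall>z. is_chrom l z \<and> Map.empty \<subseteq>\<^sub>m z \<longrightarrow> f z \<le> f g"
    proof (intro allI impI)
      fix z assume "is_chrom l z \<and> Map.empty \<subseteq>\<^sub>m z"
      then show "f z \<le> f g" using gm[of z] by (cases "z = g") auto
    qed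
    then show ?thesis unfolding constrained_optima_def using gc map_le_empty by blast
  qed
  show "constrained_optima l f Map.empty \<subseteq> {g}"
  proof
    fix y assume "y \<in> constrained_optima l f Map.empty"
    then have yc: "is_chrom l y" and "\<forall>z. is_chrom l z \<and> Map.empty \<subseteq>\<^sub>m z \<longrightarrow> f z \<le> f y"
      unfolding constrained_optima_def by auto
    then have "f g \<le> f y" using gc map_le_empty by blast
    then have "y = g" using gm[OF yc] by (cases "y = g") auto
    then show "y \<in> {g}" by simp
  qed
qed

definition Ucl where "Ucl l f v k = (\<Union>i\<in>{..k}. IN l f i v)"
definition stp where "stp l f X = {u. \<exists>w\<in>X. epistatic l f {u} w}"

lemma Ucl_Suc: "Ucl l f v (Suc k) = {v} \<union> stp l f (Ucl l f v k)"
proof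
  show "Ucl l f v (Suc k) \<subseteq> {v} \<union> stp l f (Ucl l f v k)"
  proof
    fix x assume "x \<in> Ucl l f v (Suc k)"
    then obtain i where i: "i \<le> Suc k" "x \<in> IN l f i v" unfolding Ucl_def by auto
    show "x \<in> {v} \<union> stp l f (Ucl l f v k)"
    proof (cases i)
      case 0 then show ?thesis using i by simp
    next
      case (Suc j)
      then show ?thesis using i unfolding stp_def Ucl_def by auto
    qed
  qed
next
  show "{v} \<union> stp l f (Ucl l f v k) \<subseteq> Ucl l f v (Suc k)"
  proof
    fix x assume "x \<in> {v} \<union> stp l f (Ucl l f v k)"
    then consider "x = v" | j w where "j \<le> k" "w \<in> IN l f j v" "epistatic l f {x} w"
      unfolding stp_def Ucl_def by auto
    then show "x \<in> Ucl l f v (Suc k)"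
    proof cases
      case 1 then show ?thesis unfolding Ucl_def by force
    next
      case 2
      then have "x \<in> IN l f (Suc j) v" by auto
      then show ?thesis unfolding Ucl_def using 2(1) by (metis UN_iff Suc_le_mono atMost_iff)
    qed
  qed
qed

lemma Ucl_mono: "Ucl l f v k \<subseteq> Ucl l f v (Suc k)"
  unfolding Ucl_def by (intro UN_mono) auto

lemma Ucl_loci: "v \<in> loci l \<Longrightarrow> Ucl l f v k \<subseteq> loci l"
proof (induction k)
  case 0 then show ?case unfolding Ucl_def by simp
next
  case (Suc k) then show ?case unfolding Ucl_Suc stp_def epistatic_def by auto
qed

lemma Ucl_stable: "Ucl l f v (Suc k) = Ucl l f v k \<Longrightarrow> Ucl l f v (Suc (Suc k)) = Ucl l f v (Suc k)"
  by (metis Ucl_Suc)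

lemma Ucl_card: "Ucl l f v (Suc k) \<noteq> Ucl l f v k \<Longrightarrow> v \<in> loci l \<Longrightarrow> card (Ucl l f v k) \<ge> Suc k"
proof (induction k)
  case 0 then show ?case unfolding Ucl_def by simp
next
  case (Suc k)
  then have "Ucl l f v (Suc k) \<noteq> Ucl l f v k" using Ucl_stable by metis
  then have c: "card (Ucl l f v k) \<ge> Suc k" using Suc by blast
  have fin: "finite (Ucl l f v (Suc k))"
    by (rule finite_subset[OF Ucl_loci[OF Suc.prems(2)]]) (simp add: loci_def)
  have "Ucl l f v k \<subset> Ucl l f v (Suc k)" using Ucl_mono \<open>Ucl l f v (Suc k) \<noteq> Ucl l f v k\<close> by blast
  then have "card (Ucl l f v k) < card (Ucl l f v (Suc k))" using fin psubset_card_mono by blast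
  then show ?case using c by simp
qed

lemma closure:
  assumes "l \<ge> 1" "v \<in> loci l" "w \<in> IN_star l f v" "epistatic l f {u} w"
  shows "u \<in> IN_star l f v"
proof -
  obtain m where m: "l = Suc m" using assms(1) by (cases l) auto
  have S: "IN_star l f v = Ucl l f v m" by (simp only: IN_star_def Ucl_def m lessThan_Suc_atMost)
  have eq: "Ucl l f v (Suc m) = Ucl l f v m"
  proof (rule ccontr)
    assume ne: "Ucl l f v (Suc m) \<noteq> Ucl l f v m"
    have c: "card (Ucl l f v m) \<ge> Suc m" using Ucl_card[OF ne assms(2)] .
    have fin: "finite (Ucl l f v (Suc m))"
    by (rule finite_subset[OF Ucl_loci[OF assms(2)]]) (simp add: loci_def)
    have "Ucl l f v m \<subset> Ucl l f v (Suc m)" using Ucl_mono ne by blast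
    then have "card (Ucl l f v m) < card (Ucl l f v (Suc m))" using fin psubset_card_mono by blast
    moreover have "card (Ucl l f v (Suc m)) \<le> card (loci l)"
      by (rule card_mono[OF _ Ucl_loci[OF assms(2)]]) (simp add: loci_def)
    moreover have "card (loci l) = l" by (simp add: loci_def)
    ultimately show False using c m by linarith
  qed
  have wU: "w \<in> Ucl l f v m" using assms(3) S by simp
  have "u \<in> stp l f (Ucl l f v m)" unfolding stp_def using assms(4) wU by blast
  then have "u \<in> Ucl l f v (Suc m)" unfolding Ucl_Suc by (rule UnI2)
  then show ?thesis using eq S by simp
qed

theorem lemma1:
  fixes l :: nat and f :: "(nat \<rightharpoonup> bool) \<Rightarrow> real" and g :: "nat \<rightharpoonup> bool" and v :: nat
  assumes "l \<ge> 1"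
    and "unique_global_max l f g"
    and "no_weak_epistasis l f"
    and "v \<in> loci l"
  shows "stationary_optimum l f (g |` IN_star l f v)"
proof -
  define S where "S = IN_star l f v"
  have domg: "dom g = loci l" using assms(2) unfolding unique_global_max_def is_chrom_def by simp
  have Sl: "S \<subseteq> loci l" unfolding S_def IN_star_def using Ucl_loci[OF assms(4)]
    unfolding Ucl_def by force
  have vS: "v \<in> S" unfolding S_def IN_star_def using assms(1) by (intro UN_I[of 0]) auto
  have domA: "dom (g |` S) = S" using Sl domg by auto
  have psiE: "\<And>w. psi_at l f Map.empty w = {g w}"
    unfolding psi_at_def optima_empty[OF assms(2)] by simp
  have inv: "\<And>w R. w \<in> S \<Longrightarrow> dom (R::nat \<rightharpoonup> bool) \<subseteq> loci l - S \<Longrightarrow> psi_at l f R w = {g w}"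
  proof -
    fix w and R :: "nat \<rightharpoonup> bool" assume w: "w \<in> S" and R: "dom R \<subseteq> loci l - S"
    have "psi_at l f R w = psi_at l f Map.empty w"
      using psi_invariant[OF assms(3), of w S R] closure[OF assms(1,4)] w R Sl
      unfolding S_def by blast
    then show "psi_at l f R w = {g w}" using psiE by simp
  qed
  have optS: "\<And>y R w. y \<in> constrained_optima l f R \<Longrightarrow> dom R \<subseteq> loci l - S \<Longrightarrow> w \<in> S \<Longrightarrow> y w = g w"
  proof -
    fix y w and R :: "nat \<rightharpoonup> bool" assume yo: "y \<in> constrained_optima l f R" "dom R \<subseteq> loci l - S" "w \<in> S"
    moreover have "y w \<in> psi_at l f R w" using \<open>y \<in> constrained_optima l f R\<close> unfolding psi_at_def by simp
    ultimately show "y w = g w" using inv by blast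
  qed
  show ?thesis
    unfolding stationary_optimum_def S_def[symmetric]
  proof (intro conjI allI impI)
    show "is_assignment l (g |` S)" unfolding is_assignment_def using domA Sl by simp
    show "g |` S \<noteq> Map.empty" using domA vS by (metis dom_empty empty_iff)
  next
    fix A' R :: "nat \<rightharpoonup> bool"
    assume h: "dom A' = dom (g |` S) \<and> A' \<noteq> g |` S \<and> dom R = loci l - dom (g |` S)"
    then have dA': "dom A' = S" and ne: "A' \<noteq> g |` S" and dR: "dom R = loci l - S"
      using domA by auto
    obtain y where y: "y \<in> constrained_optima l f R" using optima_exist[of R l f] dR by auto
    have ychrom: "is_chrom l y" and yR: "R \<subseteq>\<^sub>m y"
      and ymax: "\<And>z. is_chrom l z \<Longrightarrow> R \<subseteq>\<^sub>m z \<Longrightarrow> f z \<le> f y"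
      using y unfolding constrained_optima_def by auto
    have yeq: "y = R ++ (g |` S)"
    proof
      fix x
      show "y x = (R ++ (g |` S)) x"
      proof (cases "x \<in> S")
        case True
        then have "y x = g x" using optS[OF y] dR by blast
        moreover have "g x \<noteq> None" using True Sl domg by blast
        ultimately show ?thesis using True by (auto simp: map_add_def split: option.splits)
      next
        case False
        then have "(R ++ (g |` S)) x = R x" by (simp add: map_add_def)
        moreover have "y x = R x"
        proof (cases "x \<in> dom R")
          case True then show ?thesis using yR unfolding map_le_def by auto
        next
          case False
          then have "x \<notin> loci l" using dR \<open>x \<notin> S\<close> by blast
          then show ?thesis using ychrom False unfolding is_chrom_def by auto
        qed
        ultimately show ?thesis by simp
      qed
    qed
    have y2chrom: "is_chrom l (R ++ A')" unfolding is_chrom_def using dA' dR Sl by auto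
    have disj: "dom R \<inter> dom A' = {}" using dA' dR by auto
    have y2R: "R \<subseteq>\<^sub>m R ++ A'" using map_add_comm[OF disj] map_le_map_add by metis
    have le: "f (R ++ A') \<le> f y" using ymax[OF y2chrom y2R] .
    have "f (R ++ A') \<noteq> f y"
    proof
      assume eqf: "f (R ++ A') = f y"
      then have y2: "R ++ A' \<in> constrained_optima l f R"
        using y2chrom y2R ymax unfolding constrained_optima_def by auto
      have "A' = g |` S"
      proof
        fix x
        show "A' x = (g |` S) x"
        proof (cases "x \<in> S")
          case True
          then have "(R ++ A') x = g x" using optS[OF y2] dR by blast
          moreover have "A' x \<noteq> None" using True dA' by blast
          ultimately show ?thesis using True by (auto simp: map_add_def split: option.splits)
        next
          case False then show ?thesis using dA' by auto
        qed
      qed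
      then show False using ne by simp
    qed
    then show "f (R ++ g |` S) > f (R ++ A')" using le yeq by simp
  qed
qed

end
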